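(* Let $G=(V,E)$ be the king grid and let $S\subset V$ be a locating-paired-dominating set of $G$. Fix any perfect matching $M$ of the induced subgraph $G[S]$, and for $v\in S$ let $m(v)$ denote the partner of $v$ in $M$. Define $S_1=\{v\in S : |N(v)\cap N(m(v))|=2\}$ and $S_2=\{v\in S : |N(v)\cap N(m(v))|=4\}$. Then $$\frac{14}{3}D(S_1)+\frac{9}{2}D(S_2)\ge 1.$$
   Context: The king grid is the infinite graph with vertex set $\mathbb{Z}\times\mathbb{Z}$ in which two distinct vertices are adjacent iff their Euclidean distance is at most $\sqrt2$. $N(v)$ is the open neighborhood of $v$ and $N[v]=N(v)\cup\{v\}$. A set $S\subset V$ is a locating-paired-dominating set (LPDS) if (i) every vertex $v\in V$ satisfies $N[v]\cap S\neq\emptyset$, (ii) the induced subgraph $G[S]$ has a perfect matching, and (iii) for any two distinct vertices $u,v\in V\setminus S$, $N(u)\cap S\neq N(v)\cap S$. For $k\ge 0$ and $u\in V$, $N^k[u]=\{x\in V: d(u,x)\le k\}$, where $d$ is graph distance. The density of a set $A\subset V$ is $D(A)=\limsup_{k\to\infty}\frac{|A\cap N^k[u]|}{|N^k[u]|}$ (independent of the choice of $u$). Note $S_1$ consists of vertices whose partner is at Euclidean distance $\sqrt2$ and $S_2$ of those whose partner is at distance $1$; $S=S_1\cup S_2$ disjointly. *)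

theory Defs
  imports "HOL-Library.Liminf_Limsup" "HOL-Library.Extended_Real"
begin

type_synonym vtx = "int \<times> int"

definition king_adj :: "vtx \<Rightarrow> vtx \<Rightarrow> bool" where
  "king_adj u v \<longleftrightarrow> u \<noteq> v \<and> (fst u - fst v)\<^sup>2 + (snd u - snd v)\<^sup>2 \<le> 2"

definition king_edges :: "(vtx \<times> vtx) set" where
  "king_edges = {(u, v). king_adj u v}"

definition nbh :: "vtx \<Rightarrow> vtx set" where
  "nbh v = {w. king_adj v w}"

definition cnbh :: "vtx \<Rightarrow> vtx set" where
  "cnbh v = insert v (nbh v)"

text \<open>m is a perfect matching of the induced subgraph G[S], given as the partner map.\<close>
definition perfect_matching_on :: "vtx set \<Rightarrow> (vtx \<Rightarrow> vtx) \<Rightarrow> bool" where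
  "perfect_matching_on S m \<longleftrightarrow> (\<forall>v\<in>S. m v \<in> S \<and> king_adj v (m v) \<and> m (m v) = v)"

definition is_LPDS :: "vtx set \<Rightarrow> bool" where
  "is_LPDS S \<longleftrightarrow>
     (\<forall>v. cnbh v \<inter> S \<noteq> {}) \<and>
     (\<exists>m. perfect_matching_on S m) \<and>
     (\<forall>u v. u \<notin> S \<longrightarrow> v \<notin> S \<longrightarrow> u \<noteq> v \<longrightarrow> nbh u \<inter> S \<noteq> nbh v \<inter> S)"

definition gball :: "nat \<Rightarrow> vtx \<Rightarrow> vtx set" where
  "gball k u = {x. \<exists>n\<le>k. (u, x) \<in> king_edges ^^ n}"

text \<open>Density, computed with centre (0,0) (the paper notes independence of the centre).\<close>
definition density :: "vtx set \<Rightarrow> ereal" where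
  "density A = limsup (\<lambda>k. ereal (real (card (A \<inter> gball k (0,0))) / real (card (gball k (0,0)))))"

end

theory Submission
  imports Defs "HOL-Analysis.Extended_Real_Limits" "HOL-Real_Asymp.Real_Asymp"
begin


lemma sq_le1: "(d::int)\<^sup>2 \<le> 1 \<longleftrightarrow> \<bar>d\<bar> \<le> 1"
proof
  assume "d\<^sup>2 \<le> 1"
  show "\<bar>d\<bar> \<le> 1"
  proof (rule ccontr)
    assume "\<not> \<bar>d\<bar> \<le> 1" hence "\<bar>d\<bar> \<ge> 2" by simp
    hence "\<bar>d\<bar> * \<bar>d\<bar> \<ge> 2*2" by (intro mult_mono) auto
    thus False using \<open>d\<^sup>2 \<le> 1\<close> by (simp add: power2_eq_square abs_mult[symmetric])
  qed
next
  assume "\<bar>d\<bar> \<le> 1" hence "d \<in> {-1,0,1}" by auto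
  thus "d\<^sup>2 \<le> 1" by auto
qed

lemma king_adj_iff:
  "king_adj (a,b) (c,d) \<longleftrightarrow> (a,b) \<noteq> (c,d) \<and> \<bar>a-c\<bar> \<le> 1 \<and> \<bar>b-d\<bar> \<le> 1"
proof -
  have "(a-c)\<^sup>2 + (b-d)\<^sup>2 \<le> 2 \<longleftrightarrow> \<bar>a-c\<bar> \<le> 1 \<and> \<bar>b-d\<bar> \<le> 1"
  proof
    assume h: "(a-c)\<^sup>2 + (b-d)\<^sup>2 \<le> 2"
    have "(a-c)\<^sup>2 \<ge> 0" "(b-d)\<^sup>2 \<ge> 0" by auto
    have "(a-c)\<^sup>2 \<noteq> 2" "(b-d)\<^sup>2 \<noteq> 2"
    proof -
      have "\<And>x::int. x\<^sup>2 \<noteq> 2"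
      proof
        fix x :: int assume "x\<^sup>2 = 2"
        hence "x\<^sup>2 \<le> 2" "x\<^sup>2 > 1" by auto
        hence "\<bar>x\<bar> > 1" using sq_le1[of x] by linarith
        hence "\<bar>x\<bar> \<ge> 2" by simp
        hence "\<bar>x\<bar> * \<bar>x\<bar> \<ge> 2*2" by (intro mult_mono) auto
        thus False using \<open>x\<^sup>2 = 2\<close> by (simp add: power2_eq_square abs_mult[symmetric])
      qed
      thus "(a-c)\<^sup>2 \<noteq> 2" "(b-d)\<^sup>2 \<noteq> 2" by auto
    qed
    hence "(a-c)\<^sup>2 \<le> 1" "(b-d)\<^sup>2 \<le> 1" using h \<open>(a-c)\<^sup>2 \<ge> 0\<close> \<open>(b-d)\<^sup>2 \<ge> 0\<close> by linarith+
    thus "\<bar>a-c\<bar> \<le> 1 \<and> \<bar>b-d\<bar> \<le> 1" using sq_le1 by auto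
  next
    assume "\<bar>a-c\<bar> \<le> 1 \<and> \<bar>b-d\<bar> \<le> 1"
    hence "(a-c)\<^sup>2 \<le> 1" "(b-d)\<^sup>2 \<le> 1" using sq_le1 by auto
    thus "(a-c)\<^sup>2 + (b-d)\<^sup>2 \<le> 2" by linarith
  qed
  thus ?thesis unfolding king_adj_def by auto
qed

lemma king_adj_sym: "king_adj u v \<Longrightarrow> king_adj v u"
  unfolding king_adj_def by (auto simp: power2_commute)

lemma king_adj_irrefl: "\<not> king_adj u u"
  unfolding king_adj_def by auto

definition frame :: "int \<Rightarrow> int \<Rightarrow> int \<Rightarrow> int \<Rightarrow> bool" where
  "frame u1 u2 v1 v2 \<longleftrightarrow> (u1,u2,v1,v2) \<in> {(1,0,0,1),(1,0,0,-1),(-1,0,0,1),(-1,0,0,-1),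
      (0,1,1,0),(0,1,-1,0),(0,-1,1,0),(0,-1,-1,0)}"

definition cl :: "int \<Rightarrow> int \<Rightarrow> int \<Rightarrow> int \<Rightarrow> vtx \<Rightarrow> int \<Rightarrow> int \<Rightarrow> vtx" where
  "cl u1 u2 v1 v2 s i j = (fst s + i* u1 + j* v1, snd s + i* u2 + j* v2)"

lemma cl_eq_iff: "frame u1 u2 v1 v2 \<Longrightarrow> cl u1 u2 v1 v2 s i j = cl u1 u2 v1 v2 s k l \<longleftrightarrow> i = k \<and> j = l"
  unfolding frame_def cl_def by auto

lemma cl_adj_iff: "frame u1 u2 v1 v2 \<Longrightarrow>
  king_adj (cl u1 u2 v1 v2 s i j) (cl u1 u2 v1 v2 s k l) \<longleftrightarrow> (i,j) \<noteq> (k,l) \<and> \<bar>i-k\<bar> \<le> 1 \<and> \<bar>j-l\<bar> \<le> 1"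
  unfolding frame_def cl_def king_adj_iff
  by (auto simp: algebra_simps abs_minus_commute)

lemma cl_surj: "frame u1 u2 v1 v2 \<Longrightarrow> \<exists>i j. w = cl u1 u2 v1 v2 s i j"
proof -
  assume f: "frame u1 u2 v1 v2"
  obtain a b where w: "w = (a,b)" by fastforce
  obtain x y where s: "s = (x,y)" by fastforce
  let ?i = "(a-x)* u1 + (b-y)* u2" and ?j = "(a-x)* v1 + (b-y)* v2"
  have "w = cl u1 u2 v1 v2 s ?i ?j" using f unfolding frame_def cl_def w s by (auto simp: algebra_simps)
  thus ?thesis by blast
qed

lemma cl00: "cl u1 u2 v1 v2 s 0 0 = s" unfolding cl_def by simp



lemma nbh_cl: assumes f: "frame u1 u2 v1 v2"
  shows "nbh (cl u1 u2 v1 v2 s i j) = {cl u1 u2 v1 v2 s (i-1) (j-1), cl u1 u2 v1 v2 s (i-1) j,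
     cl u1 u2 v1 v2 s (i-1) (j+1), cl u1 u2 v1 v2 s i (j-1), cl u1 u2 v1 v2 s i (j+1),
     cl u1 u2 v1 v2 s (i+1) (j-1), cl u1 u2 v1 v2 s (i+1) j, cl u1 u2 v1 v2 s (i+1) (j+1)}"
  (is "?L = ?R")
proof
  show "?L \<subseteq> ?R"
  proof
    fix w assume "w \<in> ?L"
    obtain k l where w: "w = cl u1 u2 v1 v2 s k l" using cl_surj[OF f] by blast
    have "(i,j) \<noteq> (k,l) \<and> \<bar>i-k\<bar> \<le> 1 \<and> \<bar>j-l\<bar> \<le> 1"
      using \<open>w \<in> ?L\<close> unfolding w nbh_def using cl_adj_iff[OF f] by auto
    hence "k \<in> {i-1,i,i+1}" "l \<in> {j-1,j,j+1}" "(k,l) \<noteq> (i,j)" by auto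
    thus "w \<in> ?R" unfolding w by auto
  qed
next
  show "?R \<subseteq> ?L" unfolding nbh_def by (simp add: cl_adj_iff[OF f])
qed

lemma cnbh_cl: assumes f: "frame u1 u2 v1 v2"
  shows "cnbh (cl u1 u2 v1 v2 s i j) = {cl u1 u2 v1 v2 s (i-1) (j-1), cl u1 u2 v1 v2 s (i-1) j,
     cl u1 u2 v1 v2 s (i-1) (j+1), cl u1 u2 v1 v2 s i (j-1), cl u1 u2 v1 v2 s i j, cl u1 u2 v1 v2 s i (j+1),
     cl u1 u2 v1 v2 s (i+1) (j-1), cl u1 u2 v1 v2 s (i+1) j, cl u1 u2 v1 v2 s (i+1) (j+1)}"
  unfolding cnbh_def nbh_cl[OF f] by auto

lemma nbh_subset: "nbh (a,b) \<subseteq> {a-1..a+1} \<times> {b-1..b+1}"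
  unfolding nbh_def by (auto simp: king_adj_iff)

lemma finite_nbh: "finite (nbh u)"
  by (metis finite_SigmaI finite_atLeastAtMost_int finite_subset nbh_subset surj_pair)

lemma finite_cnbh: "finite (cnbh u)"
  unfolding cnbh_def using finite_nbh by auto

definition cc :: "vtx set \<Rightarrow> vtx \<Rightarrow> nat" where
  "cc S u = card (cnbh u \<inter> S)"

definition locating :: "vtx set \<Rightarrow> bool" where
  "locating S \<longleftrightarrow> (\<forall>u v. u \<notin> S \<longrightarrow> v \<notin> S \<longrightarrow> u \<noteq> v \<longrightarrow> nbh u \<inter> S \<noteq> nbh v \<inter> S)"

lemma cc_ge: "A \<subseteq> cnbh u \<inter> S \<Longrightarrow> card A \<le> cc S u"
  unfolding cc_def by (rule card_mono) (use finite_cnbh in auto)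

lemma mem_cnbh: "king_adj u v \<Longrightarrow> v \<in> cnbh u" unfolding cnbh_def nbh_def by auto
lemma self_cnbh: "u \<in> cnbh u" unfolding cnbh_def by auto

lemma cc_S2: assumes pm: "perfect_matching_on S m" and u: "u \<in> S"
  shows "cc S u \<ge> 2"
proof -
  have a: "king_adj u (m u)" "m u \<in> S" using pm u unfolding perfect_matching_on_def by auto
  have "card {u, m u} = 2" using a king_adj_irrefl by (metis card_2_iff)
  moreover have "{u, m u} \<subseteq> cnbh u \<inter> S" using a u mem_cnbh self_cnbh by auto
  ultimately show ?thesis using cc_ge by metis
qed

lemma cc_S3: assumes pm: "perfect_matching_on S m" and u: "u \<in> S" and s: "s \<in> S"
   and adj: "king_adj u s" and ms: "m s \<noteq> u"
  shows "cc S u \<ge> 3"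
proof -
  have a: "king_adj u (m u)" "m u \<in> S" "m (m u) = u" using pm u unfolding perfect_matching_on_def by auto
  have d: "u \<noteq> m u" "u \<noteq> s" "m u \<noteq> s" using a adj king_adj_irrefl ms by metis+
  have "card {u, m u, s} = 3" using d by auto
  moreover have "{u, m u, s} \<subseteq> cnbh u \<inter> S" using a u s adj mem_cnbh self_cnbh by auto
  ultimately show ?thesis using cc_ge by metis
qed

lemma cnbh_notS: "u \<notin> S \<Longrightarrow> cnbh u \<inter> S = nbh u \<inter> S"
  unfolding cnbh_def by auto

lemma cc_pos: "(\<forall>v. cnbh v \<inter> S \<noteq> {}) \<Longrightarrow> cc S u \<ge> 1"
  unfolding cc_def using finite_cnbh
  by (metis One_nat_def Suc_leI card_gt_0_iff finite_Int)

lemma card_eq_sub: "finite B \<Longrightarrow> A \<subseteq> B \<Longrightarrow> card B \<le> card A \<Longrightarrow> A = B"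
  by (metis card_seteq)

lemma loc1: assumes L: "locating S" and uv: "u \<notin> S" "v \<notin> S" "u \<noteq> v"
  and a: "a \<in> S" "king_adj u a" "king_adj v a" and c: "cc S u \<le> 1" "cc S v \<le> 1"
  shows False
proof -
  have "{a} = cnbh u \<inter> S" using c(1) a
    by (intro card_eq_sub) (auto simp: cc_def finite_cnbh mem_cnbh)
  moreover have "{a} = cnbh v \<inter> S" using c(2) a
    by (intro card_eq_sub) (auto simp: cc_def finite_cnbh mem_cnbh)
  ultimately show False using L uv cnbh_notS unfolding locating_def by metis
qed

lemma loc2: assumes L: "locating S" and uv: "u \<notin> S" "v \<notin> S" "u \<noteq> v"
  and a: "a \<in> S" "king_adj u a" "king_adj v a" and b: "b \<in> S" "king_adj u b" "king_adj v b"
  and ab: "a \<noteq> b" and c: "cc S u \<le> 2" "cc S v \<le> 2"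
  shows False
proof -
  have "{a,b} = cnbh u \<inter> S" using c(1) a b ab
    by (intro card_eq_sub) (auto simp: cc_def finite_cnbh mem_cnbh)
  moreover have "{a,b} = cnbh v \<inter> S" using c(2) a b ab
    by (intro card_eq_sub) (auto simp: cc_def finite_cnbh mem_cnbh)
  ultimately show False using L uv cnbh_notS unfolding locating_def by metis
qed

lemma ex_other: assumes "cc S u \<ge> 2" shows "\<exists>t\<in>cnbh u \<inter> S. t \<noteq> s"
proof (rule ccontr)
  assume "\<not> ?thesis" hence "cnbh u \<inter> S \<subseteq> {s}" by auto
  hence "card (cnbh u \<inter> S) \<le> card {s}" by (intro card_mono) auto
  thus False using assms unfolding cc_def by auto
qed



lemma inv1: "(c::nat) \<ge> 1 \<Longrightarrow> 1/real c \<le> 1" by simp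
lemma inv2: "(c::nat) \<le> 1 \<or> 1/real c \<le> 1/2" by (cases "c \<le> 1") (auto simp: frac_le)
lemma inv2': "(c::nat) \<ge> 2 \<Longrightarrow> 1/real c \<le> 1/2" by (simp add: frac_le)
lemma inv3: "(c::nat) \<le> 2 \<or> 1/real c \<le> 1/3" by (cases "c \<le> 2") (auto simp: frac_le)
lemma inv3': "(c::nat) \<ge> 3 \<Longrightarrow> 1/real c \<le> 1/3" by (simp add: frac_le)

lemma core5: "(a::real) \<le> 1 \<Longrightarrow> b \<le> 1/2 \<Longrightarrow> c \<le> 1/2 \<Longrightarrow> d \<le> 1/2 \<Longrightarrow> e \<le> 1/2 \<Longrightarrow>
  a \<le> 1/3 \<or> b \<le> 1/3 \<or> c \<le> 1/3 \<or> d \<le> 1/3 \<or> e \<le> 1/3 \<Longrightarrow> a+b+c+d+e \<le> 17/6"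
  by (elim disjE; linarith)

lemma five_gen:
  fixes x1 x2 x3 x4 x5 :: real
  assumes "x1 \<le> 1" "x2 \<le> 1" "x3 \<le> 1" "x4 \<le> 1" "x5 \<le> 1"
   "Pa \<or> x1 \<le> 1/2" "Pb \<or> x2 \<le> 1/2" "Pc \<or> x3 \<le> 1/2" "Pd \<or> x4 \<le> 1/2" "Pe \<or> x5 \<le> 1/2"
   "\<not>(Pa \<and> Pb)" "\<not>(Pa \<and> Pc)" "\<not>(Pa \<and> Pd)" "\<not>(Pa \<and> Pe)" "\<not>(Pb \<and> Pc)" "\<not>(Pb \<and> Pd)"
   "\<not>(Pb \<and> Pe)" "\<not>(Pc \<and> Pd)" "\<not>(Pc \<and> Pe)" "\<not>(Pd \<and> Pe)"
   and q: "x1 \<le> 1/3 \<or> x2 \<le> 1/3 \<or> x3 \<le> 1/3 \<or> x4 \<le> 1/3 \<or> x5 \<le> 1/3"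
  shows "x1+x2+x3+x4+x5 \<le> 17/6"
proof -
  have "(x1 \<le> 1/2 \<and> x2 \<le> 1/2 \<and> x3 \<le> 1/2 \<and> x4 \<le> 1/2 \<and> x5 \<le> 1/2) \<or>
        (x2 \<le> 1/2 \<and> x3 \<le> 1/2 \<and> x4 \<le> 1/2 \<and> x5 \<le> 1/2) \<or>
        (x1 \<le> 1/2 \<and> x3 \<le> 1/2 \<and> x4 \<le> 1/2 \<and> x5 \<le> 1/2) \<or>
        (x1 \<le> 1/2 \<and> x2 \<le> 1/2 \<and> x4 \<le> 1/2 \<and> x5 \<le> 1/2) \<or>
        (x1 \<le> 1/2 \<and> x2 \<le> 1/2 \<and> x3 \<le> 1/2 \<and> x5 \<le> 1/2) \<or>
        (x1 \<le> 1/2 \<and> x2 \<le> 1/2 \<and> x3 \<le> 1/2 \<and> x4 \<le> 1/2)"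
    using assms(6-20) by blast
  thus ?thesis
  proof (elim disjE conjE)
    assume "x1 \<le> 1/2" "x2 \<le> 1/2" "x3 \<le> 1/2" "x4 \<le> 1/2" "x5 \<le> 1/2"
    thus ?thesis by linarith
  next
    assume "x2 \<le> 1/2" "x3 \<le> 1/2" "x4 \<le> 1/2" "x5 \<le> 1/2"
    thus ?thesis using core5[of x1 x2 x3 x4 x5] assms(1) q by linarith
  next
    assume "x1 \<le> 1/2" "x3 \<le> 1/2" "x4 \<le> 1/2" "x5 \<le> 1/2"
    moreover have "x2 \<le> 1/3 \<or> x1 \<le> 1/3 \<or> x3 \<le> 1/3 \<or> x4 \<le> 1/3 \<or> x5 \<le> 1/3" using q by blast
    ultimately show ?thesis using core5[of x2 x1 x3 x4 x5] assms(2) by linarith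
  next
    assume "x1 \<le> 1/2" "x2 \<le> 1/2" "x4 \<le> 1/2" "x5 \<le> 1/2"
    moreover have "x3 \<le> 1/3 \<or> x1 \<le> 1/3 \<or> x2 \<le> 1/3 \<or> x4 \<le> 1/3 \<or> x5 \<le> 1/3" using q by blast
    ultimately show ?thesis using core5[of x3 x1 x2 x4 x5] assms(3) by linarith
  next
    assume "x1 \<le> 1/2" "x2 \<le> 1/2" "x3 \<le> 1/2" "x5 \<le> 1/2"
    moreover have "x4 \<le> 1/3 \<or> x1 \<le> 1/3 \<or> x2 \<le> 1/3 \<or> x3 \<le> 1/3 \<or> x5 \<le> 1/3" using q by blast
    ultimately show ?thesis using core5[of x4 x1 x2 x3 x5] assms(4) by linarith
  next
    assume "x1 \<le> 1/2" "x2 \<le> 1/2" "x3 \<le> 1/2" "x4 \<le> 1/2"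
    moreover have "x5 \<le> 1/3 \<or> x1 \<le> 1/3 \<or> x2 \<le> 1/3 \<or> x3 \<le> 1/3 \<or> x4 \<le> 1/3" using q by blast
    ultimately show ?thesis using core5[of x5 x1 x2 x3 x4] assms(5) by linarith
  qed
qed

lemma two_le: assumes "c1 \<ge> 2" "c2 \<ge> 2" "\<not>(c1 \<le> 2 \<and> c2 \<le> 2)"
  shows "1/real c1 + 1/real c2 \<le> 5/6"
proof -
  have "1/real c1 \<le> 1/2" "1/real c2 \<le> 1/2" using assms inv2' by auto
  moreover have "1/real c1 \<le> 1/3 \<or> 1/real c2 \<le> 1/3" using assms(3) inv3[of c1] inv3[of c2] by blast
  ultimately show ?thesis by linarith
qed

lemma three_le: assumes "c1 \<ge> 1" "c2 \<ge> 1" "c3 \<ge> 1"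
  "\<not>(c1 \<le> 1 \<and> c2 \<le> 1)" "\<not>(c1 \<le> 1 \<and> c3 \<le> 1)" "\<not>(c2 \<le> 1 \<and> c3 \<le> 1)"
  shows "1/real c1 + 1/real c2 + 1/real c3 \<le> 2"
proof -
  have a: "1/real c1 \<le> 1" "1/real c2 \<le> 1" "1/real c3 \<le> 1" using assms inv1 by auto
  have "(1/real c1 \<le> 1/2 \<and> 1/real c2 \<le> 1/2) \<or> (1/real c1 \<le> 1/2 \<and> 1/real c3 \<le> 1/2)
     \<or> (1/real c2 \<le> 1/2 \<and> 1/real c3 \<le> 1/2)"
    using assms(4-6) inv2[of c1] inv2[of c2] inv2[of c3] by blast
  thus ?thesis using a by (elim disjE conjE; linarith)
qed

lemma four_le: assumes "c1 \<ge> 2" "c2 \<ge> 2" "c3 \<ge> 2" "c4 \<ge> 2"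
  "\<not>(c1 \<le> 2 \<and> c2 \<le> 2)" "\<not>(c1 \<le> 2 \<and> c3 \<le> 2)" "\<not>(c1 \<le> 2 \<and> c4 \<le> 2)"
  "\<not>(c2 \<le> 2 \<and> c3 \<le> 2)" "\<not>(c2 \<le> 2 \<and> c4 \<le> 2)" "\<not>(c3 \<le> 2 \<and> c4 \<le> 2)"
  shows "1/real c1 + 1/real c2 + 1/real c3 + 1/real c4 \<le> 3/2"
proof -
  have a: "1/real c1 \<le> 1/2" "1/real c2 \<le> 1/2" "1/real c3 \<le> 1/2" "1/real c4 \<le> 1/2" using assms inv2' by auto
  have "(1/real c2 \<le> 1/3 \<and> 1/real c3 \<le> 1/3 \<and> 1/real c4 \<le> 1/3) \<or>
        (1/real c1 \<le> 1/3 \<and> 1/real c3 \<le> 1/3 \<and> 1/real c4 \<le> 1/3) \<or>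
        (1/real c1 \<le> 1/3 \<and> 1/real c2 \<le> 1/3 \<and> 1/real c4 \<le> 1/3) \<or>
        (1/real c1 \<le> 1/3 \<and> 1/real c2 \<le> 1/3 \<and> 1/real c3 \<le> 1/3)"
    using assms(5-10) inv3[of c1] inv3[of c2] inv3[of c3] inv3[of c4] by blast
  thus ?thesis using a by (elim disjE conjE; linarith)
qed

lemma five_le: assumes "c1 \<ge> 1" "c2 \<ge> 1" "c3 \<ge> 1" "c4 \<ge> 1" "c5 \<ge> 1"
  "\<not>(c1 \<le> 1 \<and> c2 \<le> 1)" "\<not>(c1 \<le> 1 \<and> c3 \<le> 1)" "\<not>(c1 \<le> 1 \<and> c4 \<le> 1)" "\<not>(c1 \<le> 1 \<and> c5 \<le> 1)"
  "\<not>(c2 \<le> 1 \<and> c3 \<le> 1)" "\<not>(c2 \<le> 1 \<and> c4 \<le> 1)" "\<not>(c2 \<le> 1 \<and> c5 \<le> 1)"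
  "\<not>(c3 \<le> 1 \<and> c4 \<le> 1)" "\<not>(c3 \<le> 1 \<and> c5 \<le> 1)" "\<not>(c4 \<le> 1 \<and> c5 \<le> 1)"
  "c1 \<ge> 3 \<or> c2 \<ge> 3 \<or> c3 \<ge> 3 \<or> c4 \<ge> 3 \<or> c5 \<ge> 3"
  shows "1/real c1 + 1/real c2 + 1/real c3 + 1/real c4 + 1/real c5 \<le> 17/6"
  apply (rule five_gen[where Pa="c1 \<le> 1" and Pb="c2 \<le> 1" and Pc="c3 \<le> 1" and Pd="c4 \<le> 1" and Pe="c5 \<le> 1"])
  using assms(1-5) inv1 apply auto[5]
  using inv2 apply blast+
  using assms(6-15) apply blast+
  using assms(16) inv3' by blast


definition share :: "vtx set \<Rightarrow> vtx \<Rightarrow> real" where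
  "share S s = (\<Sum>u\<in>cnbh s. 1 / real (cc S u))"

lemma cc_1: "a \<in> S \<Longrightarrow> a \<in> cnbh u \<Longrightarrow> cc S u \<ge> 1"
  using cc_ge[of "{a}" u S] by auto

lemma cc_2: "a \<in> S \<Longrightarrow> b \<in> S \<Longrightarrow> a \<noteq> b \<Longrightarrow> a \<in> cnbh u \<Longrightarrow> b \<in> cnbh u \<Longrightarrow> cc S u \<ge> 2"
  using cc_ge[of "{a,b}" u S] by auto

lemma pair1: assumes L: "locating S" and pm: "perfect_matching_on S m" and s: "s \<in> S"
  and uv: "u \<noteq> v" "king_adj u s" "king_adj v s"
  shows "\<not> (cc S u \<le> 1 \<and> cc S v \<le> 1)"
proof
  assume c: "cc S u \<le> 1 \<and> cc S v \<le> 1"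
  have "u \<notin> S" using c cc_S2[OF pm, of u] by fastforce
  moreover have "v \<notin> S" using c cc_S2[OF pm, of v] by fastforce
  ultimately show False using loc1[OF L _ _ uv(1) s uv(2,3)] c by auto
qed

lemma pair2: assumes L: "locating S" and pm: "perfect_matching_on S m" and s: "s \<in> S"
  and p: "p \<in> S" "m s = p" "s \<noteq> p"
  and uv: "u \<noteq> v" "king_adj u s" "king_adj v s" "king_adj u p" "king_adj v p"
  shows "\<not> (cc S u \<le> 2 \<and> cc S v \<le> 2)"
proof
  assume c: "cc S u \<le> 2 \<and> cc S v \<le> 2"
  have "u \<noteq> p" "v \<noteq> p" using uv king_adj_irrefl by metis+
  have "u \<notin> S" using cc_S3[OF pm _ s uv(2)] p(2) \<open>u \<noteq> p\<close> c by fastforce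
  moreover have "v \<notin> S" using cc_S3[OF pm _ s uv(3)] p(2) \<open>v \<noteq> p\<close> c by fastforce
  ultimately show False using loc2[OF L _ _ uv(1) s uv(2,3) p(1) uv(4,5) p(3)] c by auto
qed

lemma share_S2:
  assumes dom: "\<forall>v. cnbh v \<inter> S \<noteq> {}" and L: "locating S" and pm: "perfect_matching_on S m"
    and f: "frame u1 u2 v1 v2" and sS: "s \<in> S" and ms: "m s = cl u1 u2 v1 v2 s 1 0"
  shows "share S s \<le> 9/2"
proof -
  define C where "C = cl u1 u2 v1 v2 s"
  have Cinj: "C i j = C k l \<longleftrightarrow> i = k \<and> j = l" for i j k l unfolding C_def using cl_eq_iff[OF f] .
  have Cadj: "king_adj (C i j) (C k l) \<longleftrightarrow> (i,j) \<noteq> (k,l) \<and> \<bar>i-k\<bar> \<le> 1 \<and> \<bar>j-l\<bar> \<le> 1" for i j k l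
    unfolding C_def using cl_adj_iff[OF f] .
  have s0: "s = C 0 0" unfolding C_def cl00 ..
  have cn: "cnbh (C i j) = {C (i-1) (j-1), C (i-1) j, C (i-1) (j+1), C i (j-1), C i j, C i (j+1),
     C (i+1) (j-1), C (i+1) j, C (i+1) (j+1)}" for i j unfolding C_def using cnbh_cl[OF f] .
  have sS': "C 0 0 \<in> S" using sS s0 by simp
  have "m s \<in> S" using pm sS unfolding perfect_matching_on_def by blast
  hence pS: "C 1 0 \<in> S" "m (C 0 0) = C 1 0" using ms by (simp_all add: C_def cl00)
  have mc: "king_adj u v \<Longrightarrow> v \<in> cnbh u" for u v by (rule mem_cnbh)
  have sh: "share S s = 1/real (cc S (C (-1) (-1))) + 1/real (cc S (C (-1) 0)) + 1/real (cc S (C (-1) 1))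
     + (1/real (cc S (C 0 (-1))) + 1/real (cc S (C 0 1)) + 1/real (cc S (C 1 (-1))) + 1/real (cc S (C 1 1)))
     + 1/real (cc S (C 0 0)) + 1/real (cc S (C 1 0))"
    unfolding share_def s0 cn by (simp add: Cinj)
  have l: "1/real (cc S (C (-1) (-1))) + 1/real (cc S (C (-1) 0)) + 1/real (cc S (C (-1) 1)) \<le> 2"
    apply (rule three_le)
    apply (rule cc_1[OF sS']; simp add: mc Cadj)+
    apply (rule pair1[OF L pm sS']; simp add: Cadj Cinj)+
    done
  have mid: "1/real (cc S (C 0 (-1))) + 1/real (cc S (C 0 1)) + 1/real (cc S (C 1 (-1))) + 1/real (cc S (C 1 1)) \<le> 3/2"
    apply (rule four_le)
    apply (rule cc_2[OF sS' pS(1)]; simp add: mc Cadj Cinj)+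
    apply (rule pair2[OF L pm sS' pS(1) pS(2)]; simp add: Cadj Cinj)+
    done
  have c1: "1/real (cc S (C 0 0)) \<le> 1/2"
    using cc_2[OF sS' pS(1), of "C 0 0"] by (simp add: mc Cadj Cinj self_cnbh frac_le)
  have c2: "1/real (cc S (C 1 0)) \<le> 1/2"
    using cc_2[OF sS' pS(1), of "C 1 0"] by (simp add: mc Cadj Cinj self_cnbh frac_le)
  show ?thesis unfolding sh using l mid c1 c2 by linarith
qed



lemma share_S1:
  assumes dom: "\<forall>v. cnbh v \<inter> S \<noteq> {}" and L: "locating S" and pm: "perfect_matching_on S m"
    and f: "frame u1 u2 v1 v2" and sS: "s \<in> S" and ms: "m s = cl u1 u2 v1 v2 s 1 1"
  shows "share S s \<le> 14/3"
proof -
  define C where "C = cl u1 u2 v1 v2 s"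
  have Cinj: "C i j = C k l \<longleftrightarrow> i = k \<and> j = l" for i j k l unfolding C_def using cl_eq_iff[OF f] .
  have Cadj: "king_adj (C i j) (C k l) \<longleftrightarrow> (i,j) \<noteq> (k,l) \<and> \<bar>i-k\<bar> \<le> 1 \<and> \<bar>j-l\<bar> \<le> 1" for i j k l
    unfolding C_def using cl_adj_iff[OF f] .
  have s0: "s = C 0 0" unfolding C_def cl00 ..
  have cn: "cnbh (C i j) = {C (i-1) (j-1), C (i-1) j, C (i-1) (j+1), C i (j-1), C i j, C i (j+1),
     C (i+1) (j-1), C (i+1) j, C (i+1) (j+1)}" for i j unfolding C_def using cnbh_cl[OF f] .
  have sS': "C 0 0 \<in> S" using sS s0 by simp
  have "m s \<in> S" using pm sS unfolding perfect_matching_on_def by blast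
  hence pS: "C 1 1 \<in> S" "m (C 0 0) = C 1 1" using ms by (simp_all add: C_def cl00)
  have mc: "king_adj u v \<Longrightarrow> v \<in> cnbh u" for u v by (rule mem_cnbh)
  have sh: "share S s = (1/real (cc S (C (-1) 1)) + 1/real (cc S (C (-1) 0)) + 1/real (cc S (C (-1) (-1)))
     + 1/real (cc S (C 0 (-1))) + 1/real (cc S (C 1 (-1))))
     + (1/real (cc S (C 1 0)) + 1/real (cc S (C 0 1)))
     + 1/real (cc S (C 0 0)) + 1/real (cc S (C 1 1))"
    unfolding share_def s0 cn by (simp add: Cinj)
  have ab: "1/real (cc S (C 1 0)) + 1/real (cc S (C 0 1)) \<le> 5/6"
    apply (rule two_le)
    apply (rule cc_2[OF sS' pS(1)]; simp add: mc Cadj Cinj)+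
    apply (rule pair2[OF L pm sS' pS(1) pS(2)]; simp add: Cadj Cinj)+
    done
  have c1: "1/real (cc S (C 0 0)) \<le> 1/2"
    using cc_2[OF sS' pS(1), of "C 0 0"] by (simp add: mc Cadj Cinj self_cnbh frac_le)
  have c2: "1/real (cc S (C 1 1)) \<le> 1/2"
    using cc_2[OF sS' pS(1), of "C 1 1"] by (simp add: mc Cadj Cinj self_cnbh frac_le)
  have big: "cc S (C (-1) 1) \<ge> 3 \<or> cc S (C (-1) 0) \<ge> 3 \<or> cc S (C (-1) (-1)) \<ge> 3 \<or> cc S (C 0 (-1)) \<ge> 3 \<or> cc S (C 1 (-1)) \<ge> 3"
  proof (rule ccontr)
    assume "\<not> ?thesis"
    hence le: "cc S (C (-1) 1) \<le> 2" "cc S (C (-1) 0) \<le> 2" "cc S (C (-1) (-1)) \<le> 2" "cc S (C 0 (-1)) \<le> 2" "cc S (C 1 (-1)) \<le> 2"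
      by auto
    have nS: "C i j \<notin> S" if "cc S (C i j) \<le> 2" "king_adj (C i j) (C 0 0)" "(i,j) \<noteq> (1,1)" for i j
    proof
      assume "C i j \<in> S"
      hence "cc S (C i j) \<ge> 3" using cc_S3[OF pm _ sS' that(2)] pS(2) that(3) Cinj by auto
      thus False using that(1) by auto
    qed
    have F: "C (-1) 1 \<notin> S" "C (-1) 0 \<notin> S" "C (-1) (-1) \<notin> S" "C 0 (-1) \<notin> S" "C 1 (-1) \<notin> S"
      using nS le by (auto simp: Cadj)
    have l2: "False" if "u \<notin> S" "v \<notin> S" "u \<noteq> v" "t \<in> S" "king_adj u (C 0 0)" "king_adj v (C 0 0)"
      "king_adj u t" "king_adj v t" "t \<noteq> C 0 0" "cc S u \<le> 2" "cc S v \<le> 2" for u v t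
      using loc2[OF L that(1,2,3) sS' that(5,6) that(4,7,8)] that(9,10,11) by metis
    have "\<not> (cc S (C (-1) 0) \<le> 1 \<and> cc S (C 0 (-1)) \<le> 1)"
      by (rule pair1[OF L pm sS']; simp add: Cadj Cinj)
    hence "cc S (C (-1) 0) \<ge> 2 \<or> cc S (C 0 (-1)) \<ge> 2" by auto
    thus False
    proof
      assume "cc S (C (-1) 0) \<ge> 2"
      then obtain t where t: "t \<in> cnbh (C (-1) 0) \<inter> S" "t \<noteq> C 0 0" using ex_other by blast
      hence "t \<in> {C (-2) (-1), C (-2) 0, C (-2) 1, C (-1) (-1), C (-1) 0, C (-1) 1, C 0 (-1), C 0 0, C 0 1}"
        using cn[of "-1" 0] by simp
      moreover have "t \<in> S" using t by auto
      ultimately show False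
      proof (elim insertE)
        assume "t = C (-2) (-1)" thus False using l2[of "C (-1) 0" "C (-1) (-1)" t] F le \<open>t \<in> S\<close> by (simp add: Cadj Cinj)
      next
        assume "t = C (-2) 0" thus False using l2[of "C (-1) 0" "C (-1) (-1)" t] F le \<open>t \<in> S\<close> by (simp add: Cadj Cinj)
      next
        assume "t = C (-2) 1" thus False using l2[of "C (-1) 0" "C (-1) 1" t] F le \<open>t \<in> S\<close> by (simp add: Cadj Cinj)
      next
        assume "t = C 0 1" thus False using l2[of "C (-1) 0" "C (-1) 1" t] F le \<open>t \<in> S\<close> by (simp add: Cadj Cinj)
      qed (use F \<open>t \<in> S\<close> t(2) in auto)
    next
      assume "cc S (C 0 (-1)) \<ge> 2"
      then obtain t where t: "t \<in> cnbh (C 0 (-1)) \<inter> S" "t \<noteq> C 0 0" using ex_other by blast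
      hence "t \<in> {C (-1) (-2), C (-1) (-1), C (-1) 0, C 0 (-2), C 0 (-1), C 0 0, C 1 (-2), C 1 (-1), C 1 0}"
        using cn[of 0 "-1"] by simp
      moreover have "t \<in> S" using t by auto
      ultimately show False
      proof (elim insertE)
        assume "t = C (-1) (-2)" thus False using l2[of "C 0 (-1)" "C (-1) (-1)" t] F le \<open>t \<in> S\<close> by (simp add: Cadj Cinj)
      next
        assume "t = C 0 (-2)" thus False using l2[of "C 0 (-1)" "C (-1) (-1)" t] F le \<open>t \<in> S\<close> by (simp add: Cadj Cinj)
      next
        assume "t = C 1 (-2)" thus False using l2[of "C 0 (-1)" "C 1 (-1)" t] F le \<open>t \<in> S\<close> by (simp add: Cadj Cinj)
      next
        assume "t = C 1 0" thus False using l2[of "C 0 (-1)" "C 1 (-1)" t] F le \<open>t \<in> S\<close> by (simp add: Cadj Cinj)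
      qed (use F \<open>t \<in> S\<close> t(2) in auto)
    qed
  qed
  have fs: "1/real (cc S (C (-1) 1)) + 1/real (cc S (C (-1) 0)) + 1/real (cc S (C (-1) (-1)))
     + 1/real (cc S (C 0 (-1))) + 1/real (cc S (C 1 (-1))) \<le> 17/6"
    apply (rule five_le)
    apply (rule cc_1[OF sS']; simp add: mc Cadj)+
    apply (rule pair1[OF L pm sS']; simp add: Cadj Cinj)+
    apply (rule big)
    done
  show ?thesis unfolding sh using ab fs c1 c2 by linarith
qed



lemma relpow_box: "(u,x) \<in> king_edges ^^ n \<Longrightarrow> \<bar>fst x - fst u\<bar> \<le> int n \<and> \<bar>snd x - snd u\<bar> \<le> int n"
proof (induction n arbitrary: x)
  case 0 thus ?case by simp
next
  case (Suc n)
  from Suc.prems obtain y where y: "(u,y) \<in> king_edges ^^ n" "(y,x) \<in> king_edges" by (rule relpow_Suc_E)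
  have "king_adj y x" using y(2) unfolding king_edges_def by simp
  hence "\<bar>fst y - fst x\<bar> \<le> 1" "\<bar>snd y - snd x\<bar> \<le> 1"
    using king_adj_iff[of "fst y" "snd y" "fst x" "snd x"] by auto
  thus ?case using Suc.IH[OF y(1)] by auto
qed

lemma kbox_relpow: "\<bar>a\<bar> \<le> int n \<and> \<bar>b\<bar> \<le> int n \<and> (\<bar>a\<bar> = int n \<or> \<bar>b\<bar> = int n) \<Longrightarrow> ((0,0),(a,b)) \<in> king_edges ^^ n"
proof (induction n arbitrary: a b)
  case 0 thus ?case by simp
next
  case (Suc n)
  define a' where "a' = a - sgn a"
  define b' where "b' = b - sgn b"
  have h: "\<bar>a'\<bar> \<le> int n \<and> \<bar>b'\<bar> \<le> int n \<and> (\<bar>a'\<bar> = int n \<or> \<bar>b'\<bar> = int n)"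
    using Suc.prems unfolding a'_def b'_def by (auto simp: sgn_if abs_if split: if_splits)
  have "king_adj (a',b') (a,b)" unfolding king_adj_iff a'_def b'_def
    using Suc.prems by (auto simp: sgn_if abs_if)
  hence "((a',b'),(a,b)) \<in> king_edges" unfolding king_edges_def by simp
  thus ?case by (rule relpow_Suc_I[OF Suc.IH[OF h]])
qed

definition kbox :: "nat \<Rightarrow> vtx set" where
  "kbox k = {-int k..int k} \<times> {-int k..int k}"

lemma gball_box: "gball k (0,0) = kbox k"
proof
  show "gball k (0,0) \<subseteq> kbox k"
  proof
    fix x assume "x \<in> gball k (0,0)"
    then obtain n where "n \<le> k" "((0,0),x) \<in> king_edges ^^ n" unfolding gball_def by auto
    thus "x \<in> kbox k" using relpow_box[of "(0,0)" x n] unfolding kbox_def by (cases x) auto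
  qed
next
  show "kbox k \<subseteq> gball k (0,0)"
  proof
    fix x assume "x \<in> kbox k"
    then obtain a b where x: "x = (a,b)" "\<bar>a\<bar> \<le> int k" "\<bar>b\<bar> \<le> int k" unfolding kbox_def by auto
    define n where "n = nat (max \<bar>a\<bar> \<bar>b\<bar>)"
    have "n \<le> k" using x unfolding n_def by auto
    moreover have "((0,0),(a,b)) \<in> king_edges ^^ n" by (rule kbox_relpow) (auto simp: n_def)
    ultimately show "x \<in> gball k (0,0)" unfolding gball_def x by auto
  qed
qed

lemma finite_box: "finite (kbox k)" unfolding kbox_def by auto

lemma card_box: "card (kbox k) = (2*k+1)^2"
proof -
  have "nat (int k - - int k + 1) = 2*k+1" by simp
  thus ?thesis unfolding kbox_def card_cartesian_product card_atLeastAtMost_int by (simp add: power2_eq_square)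
qed

lemma cnbh_box: "u \<in> kbox k \<Longrightarrow> s \<in> cnbh u \<Longrightarrow> s \<in> kbox (Suc k)"
  using nbh_subset[of "fst u" "snd u"] unfolding cnbh_def kbox_def by (cases u) auto

lemma cnbh_sym: "s \<in> cnbh u \<Longrightarrow> u \<in> cnbh s"
  unfolding cnbh_def nbh_def using king_adj_sym by blast

lemma sum_inv_card: "finite X \<Longrightarrow> X \<noteq> {} \<Longrightarrow> (\<Sum>s\<in>X. 1 / real (card X)) = 1"
  by simp

lemma counting:
  assumes dom: "\<forall>v. cnbh v \<inter> S \<noteq> {}" and g: "\<And>s. s \<in> S \<Longrightarrow> share S s \<le> g s"
  shows "real (card (kbox k)) \<le> (\<Sum>s\<in>S \<inter> kbox (Suc k). g s)"
proof -
  let ?B = "kbox k" and ?B' = "S \<inter> kbox (Suc k)"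
  have fB': "finite ?B'" using finite_box by auto
  have "real (card ?B) = (\<Sum>u\<in>?B. 1)" by simp
  also have "\<dots> = (\<Sum>u\<in>?B. \<Sum>s\<in>cnbh u \<inter> S. 1 / real (cc S u))"
    apply (rule sum.cong[OF refl])
    unfolding cc_def using dom finite_cnbh by (subst sum_inv_card) auto
  also have "\<dots> = (\<Sum>u\<in>?B. \<Sum>s\<in>{s. s \<in> ?B' \<and> s \<in> cnbh u}. 1 / real (cc S u))"
    apply (rule sum.cong[OF refl])
    apply (rule sum.cong)
    using cnbh_box by auto
  also have "\<dots> = (\<Sum>s\<in>?B'. \<Sum>u\<in>{u. u \<in> ?B \<and> s \<in> cnbh u}. 1 / real (cc S u))"
    by (rule sum.swap_restrict[OF finite_box fB'])
  also have "\<dots> \<le> (\<Sum>s\<in>?B'. share S s)"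
    unfolding share_def
    apply (rule sum_mono)
    apply (rule sum_mono2[OF finite_cnbh])
    using cnbh_sym by auto
  also have "\<dots> \<le> (\<Sum>s\<in>?B'. g s)"
    by (rule sum_mono) (use g in auto)
  finally show ?thesis .
qed



lemma orient: assumes "king_adj s q"
  shows "\<exists>u1 u2 v1 v2. frame u1 u2 v1 v2 \<and> (q = cl u1 u2 v1 v2 s 1 1 \<or> q = cl u1 u2 v1 v2 s 1 0)"
proof -
  obtain x y a b where sq: "s = (x,y)" "q = (a,b)" by fastforce
  have h: "(x,y) \<noteq> (a,b)" "\<bar>x-a\<bar> \<le> 1" "\<bar>y-b\<bar> \<le> 1" using assms king_adj_iff sq by auto
  define dx where "dx = a - x"
  define dy where "dy = b - y"
  have d: "dx \<in> {-1,0,1}" "dy \<in> {-1,0,1}" "(dx,dy) \<noteq> (0,0)" using h unfolding dx_def dy_def by auto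
  have q: "q = (x+dx, y+dy)" unfolding sq dx_def dy_def by simp
  show ?thesis
  proof (cases "dx \<noteq> 0 \<and> dy \<noteq> 0")
    case True
    hence "frame dx 0 0 dy" using d unfolding frame_def by auto
    moreover have "q = cl dx 0 0 dy s 1 1" unfolding q cl_def sq by simp
    ultimately show ?thesis by blast
  next
    case False
    show ?thesis
    proof (cases "dy = 0")
      case True
      hence "frame dx 0 0 1" using d unfolding frame_def by auto
      moreover have "q = cl dx 0 0 1 s 1 0" unfolding q cl_def sq using True by simp
      ultimately show ?thesis by blast
    next
      case dy: False
      hence "dx = 0" using False by auto
      hence "frame 0 dy 1 0" using d dy unfolding frame_def by auto
      moreover have "q = cl 0 dy 1 0 s 1 0" unfolding q cl_def sq using \<open>dx = 0\<close> by simp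
      ultimately show ?thesis by blast
    qed
  qed
qed

lemma card_diag: assumes f: "frame u1 u2 v1 v2"
  shows "card (nbh s \<inter> nbh (cl u1 u2 v1 v2 s 1 1)) = 2"
proof -
  define C where "C = cl u1 u2 v1 v2 s"
  have Cinj: "C i j = C k l \<longleftrightarrow> i = k \<and> j = l" for i j k l unfolding C_def using cl_eq_iff[OF f] .
  have s0: "s = C 0 0" unfolding C_def cl00 ..
  have nb: "nbh (C i j) = {C (i-1) (j-1), C (i-1) j, C (i-1) (j+1), C i (j-1), C i (j+1),
     C (i+1) (j-1), C (i+1) j, C (i+1) (j+1)}" for i j unfolding C_def using nbh_cl[OF f] .
  have "nbh (C 0 0) \<inter> nbh (C 1 1) = {C 1 0, C 0 1}" unfolding nb by (auto simp: Cinj)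
  hence "card (nbh (C 0 0) \<inter> nbh (C 1 1)) = 2" by (simp add: Cinj)
  thus ?thesis by (simp add: C_def cl00)
qed

lemma card_orth: assumes f: "frame u1 u2 v1 v2"
  shows "card (nbh s \<inter> nbh (cl u1 u2 v1 v2 s 1 0)) = 4"
proof -
  define C where "C = cl u1 u2 v1 v2 s"
  have Cinj: "C i j = C k l \<longleftrightarrow> i = k \<and> j = l" for i j k l unfolding C_def using cl_eq_iff[OF f] .
  have s0: "s = C 0 0" unfolding C_def cl00 ..
  have nb: "nbh (C i j) = {C (i-1) (j-1), C (i-1) j, C (i-1) (j+1), C i (j-1), C i (j+1),
     C (i+1) (j-1), C (i+1) j, C (i+1) (j+1)}" for i j unfolding C_def using nbh_cl[OF f] .
  have "nbh (C 0 0) \<inter> nbh (C 1 0) = {C 0 (-1), C 0 1, C 1 (-1), C 1 1}" unfolding nb by (auto simp: Cinj)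
  hence "card (nbh (C 0 0) \<inter> nbh (C 1 0)) = 4" by (simp add: Cinj)
  thus ?thesis by (simp add: C_def cl00)
qed

lemma share_bound:
  assumes dom: "\<forall>v. cnbh v \<inter> S \<noteq> {}" and L: "locating S" and pm: "perfect_matching_on S m" and s: "s \<in> S"
  shows "share S s \<le> (if card (nbh s \<inter> nbh (m s)) = 2 then 14/3 else 0)
                    + (if card (nbh s \<inter> nbh (m s)) = 4 then 9/2 else 0)"
proof -
  have "king_adj s (m s)" using pm s unfolding perfect_matching_on_def by auto
  then obtain u1 u2 v1 v2 where f: "frame u1 u2 v1 v2"
    and q: "m s = cl u1 u2 v1 v2 s 1 1 \<or> m s = cl u1 u2 v1 v2 s 1 0" using orient by blast
  from q show ?thesis
  proof
    assume q1: "m s = cl u1 u2 v1 v2 s 1 1"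
    thus ?thesis using share_S1[OF dom L pm f s q1] card_diag[OF f, of s] by simp
  next
    assume q1: "m s = cl u1 u2 v1 v2 s 1 0"
    thus ?thesis using share_S2[OF dom L pm f s q1] card_orth[OF f, of s] by simp
  qed
qed

lemma sum_ind: "finite A \<Longrightarrow> T \<subseteq> S \<Longrightarrow> (\<Sum>s\<in>S \<inter> A. if s \<in> T then c else 0) = (c::real) * real (card (T \<inter> A))"
proof -
  assume "finite A" "T \<subseteq> S"
  hence "(\<Sum>s\<in>S \<inter> A. if s \<in> T then c else 0) = (\<Sum>s\<in>(S \<inter> A) \<inter> T. c)"
    by (subst sum.inter_restrict) auto
  also have "(S \<inter> A) \<inter> T = T \<inter> A" using \<open>T \<subseteq> S\<close> by auto
  finally show ?thesis by simp
qed



theorem theorem1: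
  fixes S :: "vtx set" and m :: "vtx \<Rightarrow> vtx"
  assumes "is_LPDS S"
    and "perfect_matching_on S m"
  shows "ereal (14/3) * density {v\<in>S. card (nbh v \<inter> nbh (m v)) = 2}
          + ereal (9/2) * density {v\<in>S. card (nbh v \<inter> nbh (m v)) = 4} \<ge> 1"
proof -
  have dom: "\<forall>v. cnbh v \<inter> S \<noteq> {}" and L: "locating S"
    using assms(1) unfolding is_LPDS_def locating_def by auto
  define T where "T = {v\<in>S. card (nbh v \<inter> nbh (m v)) = 2}"
  define U where "U = {v\<in>S. card (nbh v \<inter> nbh (m v)) = 4}"
  define a where "a k = real (card (T \<inter> kbox k)) / real (card (kbox k))" for k
  define b where "b k = real (card (U \<inter> kbox k)) / real (card (kbox k))" for k
  define r where "r k = real (card (kbox k)) / real (card (kbox (k+1)))" for k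
  have key: "real (card (kbox k)) \<le> 14/3 * real (card (T \<inter> kbox (Suc k))) + 9/2 * real (card (U \<inter> kbox (Suc k)))" for k
  proof -
    have "real (card (kbox k)) \<le> (\<Sum>s\<in>S \<inter> kbox (Suc k). (if card (nbh s \<inter> nbh (m s)) = 2 then 14/3 else 0)
                    + (if card (nbh s \<inter> nbh (m s)) = 4 then 9/2 else 0))"
      by (rule counting[OF dom]) (rule share_bound[OF dom L assms(2)])
    also have "\<dots> = (\<Sum>s\<in>S \<inter> kbox (Suc k). (if s \<in> T then 14/3 else 0) + (if s \<in> U then 9/2 else 0))"
      by (rule sum.cong) (auto simp: T_def U_def)
    also have "\<dots> = 14/3 * real (card (T \<inter> kbox (Suc k))) + 9/2 * real (card (U \<inter> kbox (Suc k)))"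
    proof -
      have "(\<Sum>s\<in>S \<inter> kbox (Suc k). if s \<in> T then 14/3 else 0) = 14/3 * real (card (T \<inter> kbox (Suc k)))"
        by (rule sum_ind[OF finite_box]) (auto simp: T_def)
      moreover have "(\<Sum>s\<in>S \<inter> kbox (Suc k). if s \<in> U then 9/2 else 0) = 9/2 * real (card (U \<inter> kbox (Suc k)))"
        by (rule sum_ind[OF finite_box]) (auto simp: U_def)
      ultimately show ?thesis unfolding sum.distrib by simp
    qed
    finally show ?thesis .
  qed
  have pos: "real (card (kbox k)) > 0" for k unfolding card_box by simp
  have ineq: "r k \<le> 14/3 * a (k+1) + 9/2 * b (k+1)" for k
  proof -
    have "r k \<le> (14/3 * real (card (T \<inter> kbox (Suc k))) + 9/2 * real (card (U \<inter> kbox (Suc k)))) / real (card (kbox (k+1)))"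
      unfolding r_def using key[of k] pos[of "k+1"] by (simp add: divide_right_mono)
    thus ?thesis unfolding a_def b_def by (simp add: add_divide_distrib)
  qed
  have l0: "(\<lambda>k. (2 * real k + 1)^2 / (2 * real k + 3)^2) \<longlonglongrightarrow> 1" by real_asymp
  have "r = (\<lambda>k. (2 * real k + 1)^2 / (2 * real k + 3)^2)"
    unfolding r_def card_box by (rule ext) (simp add: algebra_simps)
  hence lim: "r \<longlonglongrightarrow> 1" using l0 by simp
  have dT: "density T = limsup (\<lambda>k. ereal (a k))" unfolding density_def gball_box a_def ..
  have dU: "density U = limsup (\<lambda>k. ereal (b k))" unfolding density_def gball_box b_def ..
  have "(\<lambda>k. ereal (r k)) \<longlonglongrightarrow> ereal 1" using lim by (rule tendsto_ereal)
  hence "limsup (\<lambda>k. ereal (r k)) = ereal 1" by (rule lim_imp_Limsup[OF trivial_limit_sequentially])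
  hence "(1::ereal) = limsup (\<lambda>k. ereal (r k))" by (simp add: one_ereal_def)
  also have "\<dots> \<le> limsup (\<lambda>k. ereal (14/3) * ereal (a (k+1)) + ereal (9/2) * ereal (b (k+1)))"
    by (rule Limsup_mono) (intro always_eventually allI, use ineq in simp)
  also have "\<dots> \<le> limsup (\<lambda>k. ereal (14/3) * ereal (a (k+1))) + limsup (\<lambda>k. ereal (9/2) * ereal (b (k+1)))"
    by (rule ereal_limsup_add_mono)
  also have "\<dots> = ereal (14/3) * limsup (\<lambda>k. ereal (a (k+1))) + ereal (9/2) * limsup (\<lambda>k. ereal (b (k+1)))"
  proof -
    have e1: "limsup (\<lambda>k. ereal (14/3) * ereal (a (k+1))) = ereal (14/3) * limsup (\<lambda>k. ereal (a (k+1)))"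
      by (rule Limsup_ereal_mult_left) auto
    have e2: "limsup (\<lambda>k. ereal (9/2) * ereal (b (k+1))) = ereal (9/2) * limsup (\<lambda>k. ereal (b (k+1)))"
      by (rule Limsup_ereal_mult_left) auto
    show ?thesis by (simp only: e1 e2)
  qed
  also have "\<dots> = ereal (14/3) * density T + ereal (9/2) * density U"
    unfolding dT dU using limsup_shift[of "\<lambda>k. ereal (a k)"] limsup_shift[of "\<lambda>k. ereal (b k)"] by simp
  finally show ?thesis unfolding T_def U_def .
qed

end
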